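(* Fix $c>0$. There is a constant $\varepsilon>0$ such that if $n=2^k$ and $G$ is a random graph drawn from $\mathcal G(n,\tfrac12)$, then with probability tending to $1$ as $n\to\infty$, $L(\Psi_G)\ge n^{\varepsilon\log n}$; i.e. with high probability $L(\Psi_G)=n^{\Omega(\log n)}$.
   Context: Logarithms are base 2. $\mathcal G(n,\tfrac12)$ is the Erdős–Rényi random graph where each pair of vertices is an edge independently with probability $1/2$. Resolution: a refutation of a CNF is a sequence of clauses, each a clause of the formula or derived from earlier $A\lor x$, $B\lor\neg x$ as $A\lor B$, ending with the empty clause; $L(\phi)$ is the minimum number of clauses of a resolution refutation of $\phi$ ($\infty$ if $\phi$ is satisfiable). For a graph $G$ on $n=2^k$ vertices, identify vertices with strings $v_1\cdots v_k\in\{0,1\}^k$ (assume $ck$ is an integer). $\Psi_G$ has variables $x^i_b$ ($i\in[ck]$, $b\in[k]$) and $y$; $(x^i_b\ne v_b)$ denotes $\neg x^i_b$ if $v_b=1$ and $x^i_b$ if $v_b=0$. Clauses: (1) for each vertex $v$ and distinct $i,j$: $\bigvee_b(x^i_b\ne v_b)\lor\bigvee_b(x^j_b\ne v_b)$; (2) for distinct $u,v$ with $\{u,v\}\in E(G)$ and distinct $i,j$: $y\lor\bigvee_b(x^i_b\ne u_b)\lor\bigvee_b(x^j_b\ne v_b)$; (3) for distinct $u,v$ with $\{u,v\}\notin E(G)$ and distinct $i,j$: $\neg y\lor\bigvee_b(x^i_b\ne u_b)\lor\bigvee_b(x^j_b\ne v_b)$. *)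

theory Defs
  imports Complex_Main "HOL-Library.Extended_Nat"
begin

text \<open>A literal is a pair (variable, polarity); polarity True means the positive
literal x, False means the negated literal not x.\<close>

type_synonym 'v lit = "'v \<times> bool"
type_synonym 'v clause = "'v lit set"

definition resolvent :: "'v clause \<Rightarrow> 'v clause \<Rightarrow> 'v clause \<Rightarrow> bool" where
  "resolvent C1 C2 R \<longleftrightarrow>
     (\<exists>x. (x, True) \<in> C1 \<and> (x, False) \<in> C2 \<and>
          R = (C1 - {(x, True)}) \<union> (C2 - {(x, False)}))"

definition is_refutation :: "'v clause set \<Rightarrow> 'v clause list \<Rightarrow> bool" where
  "is_refutation F P \<longleftrightarrow>
     P \<noteq> [] \<and> last P = {} \<and>
     (\<forall>t < length P. P ! t \<in> F \<or>
        (\<exists>a < t. \<exists>b < t. resolvent (P ! a) (P ! b) (P ! t)))"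

definition res_length :: "'v clause set \<Rightarrow> enat" where
  "res_length F =
     (if \<exists>P. is_refutation F P
      then enat (LEAST m. \<exists>P. is_refutation F P \<and> length P = m)
      else \<infinity>)"

text \<open>Variables: X i b stands for x^i_b (i \<in> [ck], b \<in> [k]), and Y for y.
Vertices of the graph on n = 2^k vertices are the naturals v < 2^k, identified
with their binary strings: v_b is bit b of v.\<close>

datatype var = X nat nat | Y

definition neq_block :: "nat \<Rightarrow> nat \<Rightarrow> nat \<Rightarrow> var clause" where
  "neq_block k i v = {(X i b, \<not> bit v b) | b. b < k}"

definition vertex_pairs :: "nat \<Rightarrow> nat set set" where
  "vertex_pairs k = {{u, v} | u v. u < 2^k \<and> v < 2^k \<and> u \<noteq> v}"

text \<open>\<Psi>_G with m = ck pigeon indices.\<close>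
definition Psi :: "nat \<Rightarrow> nat \<Rightarrow> nat set set \<Rightarrow> var clause set" where
  "Psi k m E =
     {neq_block k i v \<union> neq_block k j v | v i j.
        v < 2^k \<and> i < m \<and> j < m \<and> i \<noteq> j}
   \<union> {{(Y, True)} \<union> neq_block k i u \<union> neq_block k j v | u v i j.
        u < 2^k \<and> v < 2^k \<and> u \<noteq> v \<and> {u, v} \<in> E \<and> i < m \<and> j < m \<and> i \<noteq> j}
   \<union> {{(Y, False)} \<union> neq_block k i u \<union> neq_block k j v | u v i j.
        u < 2^k \<and> v < 2^k \<and> u \<noteq> v \<and> {u, v} \<notin> E \<and> i < m \<and> j < m \<and> i \<noteq> j}"

text \<open>With p = 1/2 every edge set on the vertex set is equally likely, so the
probability of a property is the fraction of edge sets satisfying it.\<close>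
definition gnp_half_prob :: "nat \<Rightarrow> (nat set set \<Rightarrow> bool) \<Rightarrow> real" where
  "gnp_half_prob k Q =
     real (card {E. E \<subseteq> vertex_pairs k \<and> Q E}) / real (card (Pow (vertex_pairs k)))"

end

theory Submission
  imports Defs "HOL-Library.FuncSet" "HOL-Real_Asymp.Real_Asymp"
begin


definition vars :: "'v clause \<Rightarrow> 'v set" where "vars C = fst ` C"

definition Lits :: "nat \<Rightarrow> nat \<Rightarrow> var clause" where
  "Lits k m = {(X i b, p) | i b p. i < m \<and> b < k} \<union> {(Y, p) | p. True}"

lemma finite_Lits: "finite (Lits k m)"
proof -
  have "Lits k m \<subseteq> (\<lambda>(i,b,p). (X i b, p)) ` ({..<m} \<times> {..<k} \<times> UNIV) \<union> (\<lambda>p. (Y,p)) ` UNIV"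
    unfolding Lits_def by (auto simp: image_iff)
  moreover have "finite ((\<lambda>(i,b,p). (X i b, p)) ` ({..<m} \<times> {..<k} \<times> (UNIV::bool set)) \<union> (\<lambda>p. (Y,p)) ` (UNIV::bool set))"
    by auto
  ultimately show ?thesis by (rule finite_subset)
qed

lemma nb_Lits: "i < m \<Longrightarrow> neq_block k i v \<subseteq> Lits k m"
  unfolding neq_block_def Lits_def by auto

lemma Psi_Lits: "C \<in> Psi k m E \<Longrightarrow> C \<subseteq> Lits k m"
  unfolding Psi_def Lits_def neq_block_def by auto

lemma refut_Lits:
  assumes "is_refutation (Psi k m E) P"
  shows "t < length P \<Longrightarrow> P ! t \<subseteq> Lits k m"
proof (induction t rule: less_induct)
  case (less t)
  from assms less.prems have "P ! t \<in> Psi k m E \<or> (\<exists>a < t. \<exists>b < t. resolvent (P ! a) (P ! b) (P ! t))"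
    unfolding is_refutation_def by blast
  then show ?case
  proof
    assume "P ! t \<in> Psi k m E" then show ?thesis by (rule Psi_Lits)
  next
    assume "\<exists>a < t. \<exists>b < t. resolvent (P ! a) (P ! b) (P ! t)"
    then obtain a b x where "a < t" "b < t" "P ! t = (P ! a - {(x, True)}) \<union> (P ! b - {(x, False)})"
      unfolding resolvent_def by blast
    with less.IH[of a] less.IH[of b] less.prems show ?thesis by auto
  qed
qed

definition vec :: "nat \<Rightarrow> (nat \<Rightarrow> bool) \<Rightarrow> nat" where
  "vec k \<phi> = horner_sum of_bool 2 (map \<phi> [0..<k])"

lemma vec_less: "vec k \<phi> < 2^k"
proof -
  have "take_bit k (vec k \<phi>) = vec k \<phi>"
    unfolding vec_def by (simp add: take_bit_horner_sum_bit_eq)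
  then show ?thesis by (simp add: take_bit_nat_eq_self_iff)
qed

lemma bit_vec: "bit (vec k \<phi>) b \<longleftrightarrow> b < k \<and> \<phi> b"
  unfolding vec_def by (auto simp: bit_horner_sum_bit_iff)

lemma bits_eq:
  fixes u v :: nat
  assumes "u < 2^k" "v < 2^k" "\<forall>b<k. bit u b = bit v b"
  shows "u = v"
proof -
  have "take_bit k u = take_bit k v"
    using assms(3) by (auto simp: bit_eq_iff bit_take_bit_iff)
  with assms(1,2) show ?thesis by (metis take_bit_nat_eq_self_iff)
qed



definition ext :: "(var \<Rightarrow> bool option) \<Rightarrow> (var \<Rightarrow> bool option) \<Rightarrow> var \<Rightarrow> bool option" where
  "ext \<rho> h x = (case h x of None \<Rightarrow> \<rho> x | Some p \<Rightarrow> Some p)"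
definition fals :: "(var \<Rightarrow> bool option) \<Rightarrow> var clause \<Rightarrow> bool" where
  "fals a C \<longleftrightarrow> (\<forall>(x,p)\<in>C. a x = Some (\<not>p))"
definition sat :: "(var \<Rightarrow> bool option) \<Rightarrow> var clause \<Rightarrow> bool" where
  "sat a C \<longleftrightarrow> (\<exists>(x,p)\<in>C. a x = Some p)"
definition cnt :: "nat \<Rightarrow> (var \<Rightarrow> bool option) \<Rightarrow> nat \<Rightarrow> nat" where
  "cnt k h i = card {b. b < k \<and> h (X i b) \<noteq> None}"
definition heavy :: "nat \<Rightarrow> nat \<Rightarrow> nat \<Rightarrow> (var \<Rightarrow> bool option) \<Rightarrow> nat set" where
  "heavy k m \<theta> h = {i. i < m \<and> \<theta> \<le> cnt k h i}"
definition XV :: "nat \<Rightarrow> nat \<Rightarrow> var set" where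
  "XV k m = {X i b | i b. i < m \<and> b < k}"
definition good_f where
  "good_f k E \<rho> h Hv f \<longleftrightarrow> inj_on f Hv \<and>
     (\<forall>i\<in>Hv. f i < 2^k \<and> (\<forall>b<k. \<forall>p. ext \<rho> h (X i b) = Some p \<longrightarrow> bit (f i) b = p)) \<and>
     (\<forall>i\<in>Hv. \<forall>j\<in>Hv. i \<noteq> j \<longrightarrow> {f i, f j} \<in> E)"
definition Hs where
  "Hs k m E \<rho> \<theta> h \<longleftrightarrow> (\<forall>x. h x \<noteq> None \<longrightarrow> \<rho> x = None \<and> x \<in> XV k m) \<and>
     (\<exists>f. good_f k E \<rho> h (heavy k m \<theta> h) f)"

lemma fals_Un[simp]: "fals a (A \<union> B) \<longleftrightarrow> fals a A \<and> fals a B"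
  unfolding fals_def by auto
lemma fals_insert[simp]: "fals a (insert l C) \<longleftrightarrow> a (fst l) = Some (\<not> snd l) \<and> fals a C"
  unfolding fals_def by (cases l) auto
lemma fals_nb: "fals a (neq_block k i v) \<longleftrightarrow> (\<forall>b<k. a (X i b) = Some (bit v b))"
  unfolding fals_def neq_block_def by auto

context
  fixes k m :: nat and E :: "nat set set" and \<rho> :: "var \<Rightarrow> bool option" and \<theta> t0 D :: nat
  assumes rhoY: "\<rho> Y = Some True"
  and nfree: "\<forall>i<m. k div 2 \<le> card {b. b < k \<and> \<rho> (X i b) = None}"
  and theta: "0 < \<theta>" "\<theta> \<le> k div 2"
  and Dbound: "k - k div 2 + (\<theta> - 1) \<le> D"
  and GP: "\<forall>S I a. S \<subseteq> {..<2^k} \<longrightarrow> card S < t0 \<longrightarrow> I \<subseteq> {..<k} \<longrightarrow> card I \<le> D \<longrightarrow> a < (2::nat)^k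
            \<longrightarrow> (\<exists>v<2^k. (\<forall>b\<in>I. bit v b = bit a b) \<and> v \<notin> S \<and> (\<forall>s\<in>S. {v,s} \<in> E))"
begin

lemma full_heavy:
  assumes H: "Hs k m E \<rho> \<theta> h" and f: "good_f k E \<rho> h (heavy k m \<theta> h) f"
    and i: "i < m" and v: "v < 2^k" and fa: "\<forall>b<k. ext \<rho> h (X i b) = Some (bit v b)"
  shows "i \<in> heavy k m \<theta> h \<and> f i = v"
proof -
  have "{b. b < k \<and> \<rho> (X i b) = None} \<subseteq> {b. b < k \<and> h (X i b) \<noteq> None}"
    using fa by (auto simp: ext_def split: option.splits)
  then have "card {b. b < k \<and> \<rho> (X i b) = None} \<le> cnt k h i"
    unfolding cnt_def by (intro card_mono) auto
  with nfree i theta have hv: "i \<in> heavy k m \<theta> h" unfolding heavy_def by force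
  with f fa have "\<forall>b<k. bit (f i) b = bit v b" unfolding good_f_def by blast
  moreover have "f i < 2^k" using f hv unfolding good_f_def by blast
  ultimately have "f i = v" using bits_eq v by blast
  with hv show ?thesis by blast
qed

lemma axioms_ok:
  assumes H: "Hs k m E \<rho> \<theta> h" and C: "C \<in> Psi k m E"
  shows "\<not> fals (ext \<rho> h) C"
proof
  assume F: "fals (ext \<rho> h) C"
  obtain f where f: "good_f k E \<rho> h (heavy k m \<theta> h) f" using H unfolding Hs_def by blast
  have hY: "h Y = None" using H rhoY unfolding Hs_def XV_def by force
  from C consider
      (a) v i j where "C = neq_block k i v \<union> neq_block k j v" "v < 2^k" "i < m" "j < m" "i \<noteq> j"
    | (b) u v i j where "C = {(Y, True)} \<union> neq_block k i u \<union> neq_block k j v" 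
    | (c) u v i j where "C = {(Y, False)} \<union> neq_block k i u \<union> neq_block k j v" "u < 2^k" "v < 2^k"
         "u \<noteq> v" "{u, v} \<notin> E" "i < m" "j < m" "i \<noteq> j"
    unfolding Psi_def by blast
  then show False
  proof cases
    case a
    with F have "\<forall>b<k. ext \<rho> h (X i b) = Some (bit v b)" "\<forall>b<k. ext \<rho> h (X j b) = Some (bit v b)"
      by (auto simp: fals_nb)
    with full_heavy[OF H f] a have "i \<in> heavy k m \<theta> h" "f i = v" "j \<in> heavy k m \<theta> h" "f j = v"
      by blast+
    with f a show False unfolding good_f_def inj_on_def by metis
  next
    case b
    with F hY rhoY show False by (simp add: ext_def)
  next
    case c
    with F have "\<forall>b<k. ext \<rho> h (X i b) = Some (bit u b)" "\<forall>b<k. ext \<rho> h (X j b) = Some (bit v b)"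
      by (auto simp: fals_nb)
    with full_heavy[OF H f] c have "i \<in> heavy k m \<theta> h" "f i = u" "j \<in> heavy k m \<theta> h" "f j = v"
      by blast+
    with f c show False unfolding good_f_def by metis
  qed
qed


lemma ext_restrict:
  assumes H: "Hs k m E \<rho> \<theta> h" and e: "ext \<rho> (h |` D') x = Some p"
  shows "ext \<rho> h x = Some p"
  using assms unfolding Hs_def ext_def restrict_map_def
  by (auto split: option.splits if_splits)

lemma Hs_restrict:
  assumes H: "Hs k m E \<rho> \<theta> h"
  shows "Hs k m E \<rho> \<theta> (h |` D')"
proof -
  obtain f where f: "good_f k E \<rho> h (heavy k m \<theta> h) f" using H unfolding Hs_def by blast
  have sub: "heavy k m \<theta> (h |` D') \<subseteq> heavy k m \<theta> h"
  proof
    fix i assume "i \<in> heavy k m \<theta> (h |` D')"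
    then have "i < m" "\<theta> \<le> cnt k (h |` D') i" unfolding heavy_def by auto
    moreover have "cnt k (h |` D') i \<le> cnt k h i"
      unfolding cnt_def by (intro card_mono) (auto simp: restrict_map_def split: if_splits)
    ultimately show "i \<in> heavy k m \<theta> h" unfolding heavy_def by auto
  qed
  have "good_f k E \<rho> (h |` D') (heavy k m \<theta> (h |` D')) f"
    using f sub ext_restrict[OF H] unfolding good_f_def by (meson inj_on_subset subsetD)
  moreover have "\<forall>x. (h |` D') x \<noteq> None \<longrightarrow> \<rho> x = None \<and> x \<in> XV k m"
    using H unfolding Hs_def by (auto simp: restrict_map_def)
  ultimately show ?thesis unfolding Hs_def by blast
qed

lemma card_heavy:
  assumes H: "Hs k m E \<rho> \<theta> h" and fin: "finite (dom h)"
  shows "\<theta> * card (heavy k m \<theta> h) \<le> card (dom h)"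
proof -
  let ?A = "\<lambda>i. X i ` {b. b < k \<and> h (X i b) \<noteq> None}"
  have fh: "finite (heavy k m \<theta> h)" unfolding heavy_def by auto
  have "(\<Union>i\<in>heavy k m \<theta> h. ?A i) \<subseteq> dom h" by auto
  then have "card (\<Union>i\<in>heavy k m \<theta> h. ?A i) \<le> card (dom h)" using fin by (rule card_mono[rotated])
  moreover have "card (\<Union>i\<in>heavy k m \<theta> h. ?A i) = (\<Sum>i\<in>heavy k m \<theta> h. card (?A i))"
    using fh by (intro card_UN_disjoint) auto
  moreover have "card (?A i) = cnt k h i" for i
    unfolding cnt_def by (intro card_image) (auto simp: inj_on_def)
  moreover have "(\<Sum>i\<in>heavy k m \<theta> h. cnt k h i) \<ge> (\<Sum>i\<in>heavy k m \<theta> h. \<theta>)"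
    by (intro sum_mono) (auto simp: heavy_def)
  ultimately have "card (heavy k m \<theta> h) * \<theta> \<le> card (dom h)" by simp
  then show ?thesis by (simp add: mult.commute)
qed

lemma cnt_upd:
  "cnt k (h(X i b \<mapsto> p)) j = (if j = i \<and> b < k \<and> h (X i b) = None then Suc (cnt k h j) else cnt k h j)"
proof (cases "j = i \<and> b < k \<and> h (X i b) = None")
  case True
  then have "{b'. b' < k \<and> (h(X i b \<mapsto> p)) (X j b') \<noteq> None} = insert b {b'. b' < k \<and> h (X j b') \<noteq> None}"
    by auto
  moreover have "b \<notin> {b'. b' < k \<and> h (X j b') \<noteq> None}" using True by auto
  ultimately show ?thesis using True unfolding cnt_def by simp
next
  case False
  then have "{b'. b' < k \<and> (h(X i b \<mapsto> p)) (X j b') \<noteq> None} = {b'. b' < k \<and> h (X j b') \<noteq> None}"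
    by auto
  then show ?thesis using False unfolding cnt_def by simp
qed

lemma Hs_extend:
  assumes H: "Hs k m E \<rho> \<theta> h" and fin: "finite (dom h)" and sz: "card (dom h) < \<theta> * t0"
    and i: "i < m" and b: "b < k" and rx: "\<rho> (X i b) = None" and hx: "h (X i b) = None"
  shows "\<exists>p. Hs k m E \<rho> \<theta> (h(X i b \<mapsto> p))"
proof -
  obtain f where f: "good_f k E \<rho> h (heavy k m \<theta> h) f" using H unfolding Hs_def by blast
  have dom_ok: "\<forall>x. (h(X i b \<mapsto> p)) x \<noteq> None \<longrightarrow> \<rho> x = None \<and> x \<in> XV k m" for p
    using H rx i b unfolding Hs_def XV_def by auto
  have ext_upd: "ext \<rho> (h(X i b \<mapsto> p)) y = (if y = X i b then Some p else ext \<rho> h y)" for p y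
    unfolding ext_def by auto
  have cnt_o: "cnt k (h(X i b \<mapsto> p)) j = cnt k h j" if "j \<noteq> i" for j p
    using that by (simp add: cnt_upd)
  have cnt_i: "cnt k (h(X i b \<mapsto> p)) i = Suc (cnt k h i)" for p
    using b hx by (simp add: cnt_upd)
  show ?thesis
  proof (cases "i \<in> heavy k m \<theta> h")
    case True
    let ?p = "bit (f i) b"
    have hv: "heavy k m \<theta> (h(X i b \<mapsto> ?p)) = heavy k m \<theta> h"
      using True unfolding heavy_def by (auto simp: cnt_upd split: if_splits)
    have "good_f k E \<rho> (h(X i b \<mapsto> ?p)) (heavy k m \<theta> h) f"
      using f True unfolding good_f_def ext_upd by auto
    then show ?thesis using dom_ok hv unfolding Hs_def by metis
  next
    case False
    then have lt: "cnt k h i < \<theta>" using i unfolding heavy_def by auto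
    show ?thesis
    proof (cases "Suc (cnt k h i) < \<theta>")
      case True
      have hv: "heavy k m \<theta> (h(X i b \<mapsto> True)) = heavy k m \<theta> h"
        using True unfolding heavy_def by (auto simp: cnt_upd split: if_splits)
      have "good_f k E \<rho> (h(X i b \<mapsto> True)) (heavy k m \<theta> h) f"
        using f False unfolding good_f_def ext_upd by auto
      then show ?thesis using dom_ok hv unfolding Hs_def by metis
    next
      case False2: False
      have hv: "heavy k m \<theta> (h(X i b \<mapsto> p)) = insert i (heavy k m \<theta> h)" for p
      proof -
        have "cnt k (h(X i b \<mapsto> p)) j = (if j = i then Suc (cnt k h i) else cnt k h j)" for j
          using cnt_i cnt_o by auto
        then show ?thesis using False2 i lt unfolding heavy_def by auto
      qed
      let ?S = "f ` heavy k m \<theta> h"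
      let ?I = "{b'. b' < k \<and> ext \<rho> h (X i b') \<noteq> None}"
      let ?a = "vec k (\<lambda>b'. ext \<rho> h (X i b') = Some True)"
      have S1: "?S \<subseteq> {..<2^k}" using f unfolding good_f_def by auto
      have "\<theta> * card (heavy k m \<theta> h) < \<theta> * t0" using card_heavy[OF H fin] sz by linarith
      then have "card (heavy k m \<theta> h) < t0" by simp
      then have S2: "card ?S < t0" using card_image_le[of "heavy k m \<theta> h" f] unfolding heavy_def by simp
      have "?I \<subseteq> {b'. b' < k \<and> \<rho> (X i b') \<noteq> None} \<union> {b'. b' < k \<and> h (X i b') \<noteq> None}"
        unfolding ext_def by (auto split: option.splits)
      then have "card ?I \<le> card {b'. b' < k \<and> \<rho> (X i b') \<noteq> None} + cnt k h i"
      proof -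
        have "finite ({b'. b' < k \<and> \<rho> (X i b') \<noteq> None} \<union> {b'. b' < k \<and> h (X i b') \<noteq> None})" by auto
        then have "card ?I \<le> card ({b'. b' < k \<and> \<rho> (X i b') \<noteq> None} \<union> {b'. b' < k \<and> h (X i b') \<noteq> None})"
          using \<open>?I \<subseteq> _\<close> by (rule card_mono)
        also have "\<dots> \<le> card {b'. b' < k \<and> \<rho> (X i b') \<noteq> None} + card {b'. b' < k \<and> h (X i b') \<noteq> None}"
          by (rule card_Un_le)
        finally show ?thesis unfolding cnt_def .
      qed
      moreover have "card {b'. b' < k \<and> \<rho> (X i b') \<noteq> None} = k - card {b'. b' < k \<and> \<rho> (X i b') = None}"
      proof -
        have "{b'. b' < k \<and> \<rho> (X i b') \<noteq> None} = {..<k} - {b'. b' < k \<and> \<rho> (X i b') = None}" by auto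
        moreover have "card ({..<k} - {b'. b' < k \<and> \<rho> (X i b') = None}) = k - card {b'. b' < k \<and> \<rho> (X i b') = None}"
          by (subst card_Diff_subset) auto
        ultimately show ?thesis by simp
      qed
      ultimately have "card ?I \<le> k - k div 2 + (\<theta> - 1)" using nfree i lt by force
      then have I2: "card ?I \<le> D" using Dbound by linarith
      obtain v where v: "v < 2^k" "\<forall>b'\<in>?I. bit v b' = bit ?a b'" "v \<notin> ?S" "\<forall>s\<in>?S. {v,s} \<in> E"
        using GP S1 S2 I2 vec_less[of k] by (metis (no_types, lifting) mem_Collect_eq subsetI lessThan_iff)
      let ?p = "bit v b" and ?f = "f(i := v)"
      have "good_f k E \<rho> (h(X i b \<mapsto> ?p)) (insert i (heavy k m \<theta> h)) ?f"
        unfolding good_f_def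
      proof (intro conjI ballI allI impI)
        show "inj_on ?f (insert i (heavy k m \<theta> h))"
          using f v(3) False unfolding good_f_def inj_on_def by auto
      next
        fix j assume j: "j \<in> insert i (heavy k m \<theta> h)"
        show "?f j < 2^k" using j v(1) f unfolding good_f_def by auto
      next
        fix j b' q assume j: "j \<in> insert i (heavy k m \<theta> h)" and b': "b' < k"
          and e: "ext \<rho> (h(X i b \<mapsto> ?p)) (X j b') = Some q"
        show "bit (?f j) b' = q"
        proof (cases "j = i")
          case True
          show ?thesis
          proof (cases "b' = b")
            case True then show ?thesis using e \<open>j = i\<close> by (simp add: ext_upd)
          next
            case False
            then have e2: "ext \<rho> h (X i b') = Some q" using e \<open>j = i\<close> by (simp add: ext_upd)
            then have "bit v b' = bit ?a b'" using v(2) b' by auto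
            also have "\<dots> = q" using e2 b' by (cases q) (auto simp: bit_vec)
            finally show ?thesis using \<open>j = i\<close> by simp
          qed
        next
          case False
          then have "j \<in> heavy k m \<theta> h" using j by auto
          moreover have "ext \<rho> h (X j b') = Some q" using e False by (simp add: ext_upd)
          ultimately show ?thesis using f b' False unfolding good_f_def by auto
        qed
      next
        fix j j' assume j: "j \<in> insert i (heavy k m \<theta> h)" and j': "j' \<in> insert i (heavy k m \<theta> h)"
          and ne: "j \<noteq> j'"
        show "{?f j, ?f j'} \<in> E"
        proof -
          consider "j = i" "j' \<in> heavy k m \<theta> h" | "j' = i" "j \<in> heavy k m \<theta> h"
            | "j \<in> heavy k m \<theta> h" "j' \<in> heavy k m \<theta> h" "j \<noteq> i" "j' \<noteq> i"
            using j j' ne by blast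
          then show ?thesis
          proof cases
            case 1 then show ?thesis using v(4) ne by auto
          next
            case 2 then show ?thesis using v(4) ne by (auto simp: insert_commute)
          next
            case 3 then show ?thesis using f ne unfolding good_f_def by auto
          qed
        qed
      qed
      then show ?thesis using dom_ok hv unfolding Hs_def by metis
    qed
  qed
qed


lemma Hs_empty: "Hs k m E \<rho> \<theta> Map.empty"
proof -
  have "heavy k m \<theta> Map.empty = {}" using theta unfolding heavy_def cnt_def by auto
  then show ?thesis unfolding Hs_def good_f_def by auto
qed

lemma no_refut:
  assumes good: "\<forall>t<length P. \<not> sat \<rho> (P!t) \<longrightarrow> card {x \<in> vars (P!t). \<rho> x = None} < \<theta> * t0"
  shows "\<not> is_refutation (Psi k m E) P"
proof
  assume R: "is_refutation (Psi k m E) P"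
  have claim: "\<forall>h. Hs k m E \<rho> \<theta> h \<longrightarrow> \<not> fals (ext \<rho> h) (P!t)" if "t < length P" for t
    using that
  proof (induction t rule: less_induct)
    case (less t)
    from R less.prems have "P ! t \<in> Psi k m E \<or> (\<exists>a < t. \<exists>b < t. resolvent (P ! a) (P ! b) (P ! t))"
      unfolding is_refutation_def by blast
    then show ?case
    proof
      assume "P ! t \<in> Psi k m E" then show ?thesis using axioms_ok by blast
    next
      assume "\<exists>a < t. \<exists>b < t. resolvent (P ! a) (P ! b) (P ! t)"
      then obtain a b x where ab: "a < t" "b < t" and x1: "(x, True) \<in> P ! a" and x2: "(x, False) \<in> P ! b"
        and Rt: "P ! t = (P ! a - {(x, True)}) \<union> (P ! b - {(x, False)})"
        unfolding resolvent_def by blast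
      have IHa: "\<And>h. Hs k m E \<rho> \<theta> h \<Longrightarrow> \<not> fals (ext \<rho> h) (P!a)" using less.IH ab less.prems by auto
      have IHb: "\<And>h. Hs k m E \<rho> \<theta> h \<Longrightarrow> \<not> fals (ext \<rho> h) (P!b)" using less.IH ab less.prems by auto
      have F1: "fals g (P!a)" if "fals g (P!t)" "g x = Some False" for g
        using that Rt unfolding fals_def by fastforce
      have F2: "fals g (P!b)" if "fals g (P!t)" "g x = Some True" for g
        using that Rt unfolding fals_def by fastforce
      show ?thesis
      proof (intro allI impI notI)
        fix h assume H: "Hs k m E \<rho> \<theta> h" and F: "fals (ext \<rho> h) (P ! t)"
        show False
        proof (cases "ext \<rho> h x")
          case (Some q)
          then show False using F1[OF F] F2[OF F] IHa[OF H] IHb[OF H] by (cases q) auto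
        next
          case None
          then have rx: "\<rho> x = None" and hx: "h x = None" unfolding ext_def by (auto split: option.splits)
          have hdom: "h y \<noteq> None \<Longrightarrow> \<rho> y = None" for y using H unfolding Hs_def by auto
          have nsat: "\<not> sat \<rho> (P!t)"
          proof
            assume "sat \<rho> (P!t)"
            then obtain y p where "(y,p) \<in> P!t" "\<rho> y = Some p" unfolding sat_def by auto
            moreover have "h y = None" using hdom[of y] \<open>\<rho> y = Some p\<close> by fastforce
            ultimately show False using F unfolding fals_def ext_def by fastforce
          qed
          let ?fv = "{y \<in> vars (P!t). \<rho> y = None}"
          have cfv: "card ?fv < \<theta> * t0" using good less.prems nsat by blast
          have Lt: "P!t \<subseteq> Lits k m" using refut_Lits[OF R less.prems] .
          have ffv: "finite ?fv"
          proof -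
            have "?fv \<subseteq> fst ` Lits k m" using Lt unfolding vars_def by auto
            moreover have "finite (fst ` Lits k m)" using finite_Lits by blast
            ultimately show ?thesis by (rule finite_subset)
          qed
          let ?h0 = "h |` ?fv"
          have H0: "Hs k m E \<rho> \<theta> ?h0" using Hs_restrict[OF H] .
          have d0: "dom ?h0 \<subseteq> ?fv" by auto
          have fd0: "finite (dom ?h0)" using d0 ffv finite_subset by blast
          have cd0: "card (dom ?h0) < \<theta> * t0" using card_mono[OF ffv d0] cfv by linarith
          have "x \<in> vars (P!a)" using x1 unfolding vars_def by force
          moreover have "P!a \<subseteq> Lits k m" using refut_Lits[OF R] ab less.prems by auto
          ultimately have "x \<in> fst ` Lits k m" unfolding vars_def by auto
          then obtain i bb where xi: "x = X i bb" "i < m" "bb < k"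
            using rx rhoY unfolding Lits_def by auto
          have h0x: "?h0 x = None" using hx by (simp add: restrict_map_def)
          obtain p where H1: "Hs k m E \<rho> \<theta> (?h0(x \<mapsto> p))"
            using Hs_extend[OF H0 fd0 cd0 xi(2) xi(3)] rx h0x xi(1) by auto
          have same: "ext \<rho> (?h0(x \<mapsto> p)) y = ext \<rho> h y" if "(y,q) \<in> P!t" for y q
          proof -
            have ey: "ext \<rho> h y = Some (\<not> q)" using F that unfolding fals_def by auto
            then have "y \<noteq> x" using None by auto
            moreover have "y \<in> vars (P!t)" using that unfolding vars_def by force
            ultimately show ?thesis using hdom unfolding ext_def restrict_map_def
              by (cases "h y") auto
          qed
          have F': "fals (ext \<rho> (?h0(x \<mapsto> p))) (P!t)"
            using F same unfolding fals_def by auto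
          have ex: "ext \<rho> (?h0(x \<mapsto> p)) x = Some p" unfolding ext_def by simp
          show False using F1[OF F'] F2[OF F'] IHa[OF H1] IHb[OF H1] ex by (cases p) auto
        qed
      qed
    qed
  qed
  from R have "P \<noteq> []" "last P = {}" unfolding is_refutation_def by auto
  then have "P ! (length P - 1) = {}" "length P - 1 < length P" by (auto simp: last_conv_nth)
  with claim[of "length P - 1"] Hs_empty show False unfolding fals_def by auto
qed

end


definition rho_of :: "nat \<Rightarrow> nat \<Rightarrow> (nat \<times> nat \<Rightarrow> nat) \<Rightarrow> var \<Rightarrow> bool option" where
  "rho_of k m \<sigma> x = (case x of Y \<Rightarrow> Some True
     | X i b \<Rightarrow> (if i < m \<and> b div 2 < k div 2 \<and> b mod 2 = \<sigma> (i, b div 2) mod 2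
                 then Some (\<sigma> (i, b div 2) div 2 = 1) else None))"

lemma rho_of_Y[simp]: "rho_of k m \<sigma> Y = Some True" unfolding rho_of_def by simp

lemma rho_nfree:
  assumes "i < m"
  shows "k div 2 \<le> card {b. b < k \<and> rho_of k m \<sigma> (X i b) = None}"
proof -
  let ?g = "\<lambda>j. 2 * j + (1 - \<sigma> (i, j) mod 2)"
  have gd: "?g j div 2 = j" for j
  proof -
    have "\<sigma> (i, j) mod 2 = 0 \<or> \<sigma> (i, j) mod 2 = 1" by auto
    then show ?thesis by auto
  qed
  have "inj_on ?g {..<k div 2}"
  proof (rule inj_onI)
    fix x y assume "?g x = ?g y"
    then have "?g x div 2 = ?g y div 2" by simp
    then show "x = y" using gd by simp
  qed
  moreover have "?g ` {..<k div 2} \<subseteq> {b. b < k \<and> rho_of k m \<sigma> (X i b) = None}"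
  proof
    fix b assume "b \<in> ?g ` {..<k div 2}"
    then obtain j where j: "j < k div 2" "b = ?g j" by auto
    define s where "s = \<sigma> (i, j) mod 2"
    have s2: "s = 0 \<or> s = 1" unfolding s_def by auto
    have bs: "b = 2 * j + (1 - s)" using j unfolding s_def by simp
    have bd: "b div 2 = j" using s2 bs by auto
    have bm: "b mod 2 = 1 - s" using s2 bs by auto
    have "b < k" using j(1) bs s2 by linarith
    moreover have "b mod 2 \<noteq> \<sigma> (i, b div 2) mod 2" using bd bm s2 unfolding s_def by auto
    ultimately show "b \<in> {b. b < k \<and> rho_of k m \<sigma> (X i b) = None}" unfolding rho_of_def by auto
  qed
  ultimately have "card (?g ` {..<k div 2}) \<le> card {b. b < k \<and> rho_of k m \<sigma> (X i b) = None}"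
    by (intro card_mono) auto
  moreover have "card (?g ` {..<k div 2}) = k div 2" using \<open>inj_on ?g _\<close> by (simp add: card_image)
  ultimately show ?thesis by simp
qed

definition Blk :: "nat \<Rightarrow> var clause \<Rightarrow> (nat \<times> nat) set" where
  "Blk k C = {(i, b div 2) | i b. X i b \<in> vars C \<and> b div 2 < k div 2}"

lemma Blk_size:
  assumes "C \<subseteq> Lits k m"
  shows "card {x \<in> vars C. x \<noteq> Y} \<le> 2 * card (Blk k C) + m"
proof -
  have fB: "finite (Blk k C)"
  proof -
    have "Blk k C \<subseteq> {..<m} \<times> {..<k div 2}" using assms unfolding Blk_def vars_def Lits_def by auto
    then show ?thesis by (rule finite_subset) auto
  qed
  let ?f = "\<lambda>((i,j),r). X i (2*j+r)"
  have "{x \<in> vars C. x \<noteq> Y} \<subseteq> ?f ` (Blk k C \<times> {0,1}) \<union> (\<lambda>i. X i (k - 1)) ` {..<m}"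
  proof
    fix x assume x: "x \<in> {x \<in> vars C. x \<noteq> Y}"
    then obtain i b where xb: "x = X i b" "i < m" "b < k" using assms unfolding vars_def Lits_def by auto
    show "x \<in> ?f ` (Blk k C \<times> {0,1}) \<union> (\<lambda>i. X i (k - 1)) ` {..<m}"
    proof (cases "b div 2 < k div 2")
      case True
      then have "((i, b div 2), b mod 2) \<in> Blk k C \<times> {0,1}" using x xb unfolding Blk_def by auto
      moreover have "?f ((i, b div 2), b mod 2) = x" using xb by simp
      ultimately show ?thesis by (metis (no_types, lifting) UnI1 image_eqI)
    next
      case False
      then have "b = k - 1" using xb by linarith
      then show ?thesis using xb by auto
    qed
  qed
  then have "card {x \<in> vars C. x \<noteq> Y} \<le> card (?f ` (Blk k C \<times> {0,1}) \<union> (\<lambda>i. X i (k - 1)) ` {..<m})"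
    using fB by (intro card_mono) auto
  also have "\<dots> \<le> card (?f ` (Blk k C \<times> {0,1})) + card ((\<lambda>i. X i (k - 1)) ` {..<m})" by (rule card_Un_le)
  also have "\<dots> \<le> card (Blk k C \<times> {0::nat,1}) + card {..<m}"
    by (intro add_mono card_image_le) (use fB in auto)
  also have "\<dots> = 2 * card (Blk k C) + m" using fB by (simp add: card_cartesian_product)
  finally show ?thesis .
qed

lemma bad_subset:
  assumes C: "C \<subseteq> Lits k m"
  shows "\<exists>s. (\<forall>a\<in>Blk k C. s a < 4) \<and> {\<sigma>. \<not> sat (rho_of k m \<sigma>) C} \<subseteq> {\<sigma>. \<forall>a\<in>Blk k C. \<sigma> a \<noteq> s a}"
proof -
  have "\<forall>a\<in>Blk k C. \<exists>s. s < 4 \<and> (\<forall>\<sigma>. \<sigma> a = s \<longrightarrow> sat (rho_of k m \<sigma>) C)"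
  proof
    fix a assume "a \<in> Blk k C"
    then obtain i b where a: "a = (i, b div 2)" "X i b \<in> vars C" "b div 2 < k div 2" unfolding Blk_def by auto
    then obtain p where p: "(X i b, p) \<in> C" unfolding vars_def by force
    then have i: "i < m" using C unfolding Lits_def by auto
    let ?s = "b mod 2 + (if p then 2 else 0)"
    have "sat (rho_of k m \<sigma>) C" if "\<sigma> a = ?s" for \<sigma>
    proof -
      have "rho_of k m \<sigma> (X i b) = Some p" using that a i unfolding rho_of_def by auto
      then show ?thesis using p unfolding sat_def by auto
    qed
    moreover have "?s < 4" by auto
    ultimately show "\<exists>s. s < 4 \<and> (\<forall>\<sigma>. \<sigma> a = s \<longrightarrow> sat (rho_of k m \<sigma>) C)" by blast
  qed
  from bchoice[OF this] obtain s where "\<forall>a\<in>Blk k C. s a < 4 \<and> (\<forall>\<sigma>. \<sigma> a = s a \<longrightarrow> sat (rho_of k m \<sigma>) C)" by blast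
  then show ?thesis by blast
qed

lemma card_bad:
  assumes C: "C \<subseteq> Lits k m"
  shows "real (card {\<sigma> \<in> Pi\<^sub>E ({..<m} \<times> {..<k div 2}) (\<lambda>_. {..<4}). \<not> sat (rho_of k m \<sigma>) C})
         \<le> 4 ^ (m * (k div 2)) * (3/4) ^ card (Blk k C)"
proof -
  let ?A = "{..<m} \<times> {..<k div 2}"
  obtain s where s4: "\<forall>a\<in>Blk k C. s a < 4" and s: "{\<sigma>. \<not> sat (rho_of k m \<sigma>) C} \<subseteq> {\<sigma>. \<forall>a\<in>Blk k C. \<sigma> a \<noteq> s a}"
    using bad_subset[OF C] by blast
  have BA: "Blk k C \<subseteq> ?A" using C unfolding Blk_def vars_def Lits_def by auto
  let ?F = "\<lambda>a. if a \<in> Blk k C then {..<4::nat} - {s a} else {..<4}"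
  have sub: "{\<sigma> \<in> Pi\<^sub>E ?A (\<lambda>_. {..<4}). \<not> sat (rho_of k m \<sigma>) C} \<subseteq> Pi\<^sub>E ?A ?F"
  proof
    fix \<sigma> assume "\<sigma> \<in> {\<sigma> \<in> Pi\<^sub>E ?A (\<lambda>_. {..<4}). \<not> sat (rho_of k m \<sigma>) C}"
    then have 1: "\<sigma> \<in> Pi\<^sub>E ?A (\<lambda>_. {..<4})" and 2: "\<forall>a\<in>Blk k C. \<sigma> a \<noteq> s a" using s by auto
    show "\<sigma> \<in> Pi\<^sub>E ?A ?F" using 1 2 unfolding PiE_iff by auto
  qed
  have "card (Pi\<^sub>E ?A ?F) = (\<Prod>a\<in>?A. card (?F a))" by (rule card_PiE) auto
  also have "\<dots> = (\<Prod>a\<in>?A - Blk k C. card (?F a)) * (\<Prod>a\<in>Blk k C. card (?F a))"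
    by (rule prod.subset_diff[OF BA]) auto
  also have "\<dots> = (\<Prod>a\<in>Blk k C. card (?F a)) * (\<Prod>a\<in>?A - Blk k C. card (?F a))"
    by (rule mult.commute)
  also have "(\<Prod>a\<in>Blk k C. card (?F a)) \<le> 3 ^ card (Blk k C)"
  proof -
    have "(\<Prod>a\<in>Blk k C. card (?F a)) \<le> (\<Prod>a\<in>Blk k C. 3)"
      using s4 by (intro prod_mono) (auto simp: card_Diff_singleton_if)
    then show ?thesis by simp
  qed
  also have "(\<Prod>a\<in>?A - Blk k C. card (?F a)) = 4 ^ card (?A - Blk k C)" by simp
  finally have le: "card (Pi\<^sub>E ?A ?F) \<le> 3 ^ card (Blk k C) * 4 ^ card (?A - Blk k C)" by simp
  have cA: "card (?A - Blk k C) = m * (k div 2) - card (Blk k C)"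
    using BA by (simp add: card_Diff_subset finite_subset card_cartesian_product)
  have cB: "card (Blk k C) \<le> m * (k div 2)"
    using BA card_mono[of ?A "Blk k C"] by (simp add: card_cartesian_product)
  have "real (card {\<sigma> \<in> Pi\<^sub>E ?A (\<lambda>_. {..<4}). \<not> sat (rho_of k m \<sigma>) C}) \<le> real (card (Pi\<^sub>E ?A ?F))"
    using sub by (intro of_nat_mono card_mono) (auto intro!: finite_PiE)
  also have "\<dots> \<le> 3 ^ card (Blk k C) * 4 ^ (m * (k div 2) - card (Blk k C))"
  proof -
    have "real (card (Pi\<^sub>E ?A ?F)) \<le> real (3 ^ card (Blk k C) * 4 ^ card (?A - Blk k C))"
      using le by (simp only: of_nat_le_iff)
    then show ?thesis using cA by simp
  qed
  also have "\<dots> = 4 ^ (m * (k div 2)) * (3/4) ^ card (Blk k C)"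
  proof -
    have "(4::real) ^ (m * (k div 2)) = 4 ^ (m * (k div 2) - card (Blk k C)) * 4 ^ card (Blk k C)"
      using cB by (simp flip: power_add)
    then show ?thesis by (simp add: power_divide)
  qed
  finally show ?thesis .
qed


lemma exists_good_sigma:
  assumes R: "is_refutation (Psi k m E) P"
  and small: "real (length P) * (3/4) powr ((real w - real m)/2) < 1"
  shows "\<exists>\<sigma>. \<forall>t<length P. \<not> sat (rho_of k m \<sigma>) (P!t) \<longrightarrow> card {x \<in> vars (P!t). rho_of k m \<sigma> x = None} < w"
proof -
  let ?A = "{..<m} \<times> {..<k div 2}"
  let ?S = "Pi\<^sub>E ?A (\<lambda>_. {..<4::nat})"
  let ?q = "(3/4::real) powr ((real w - real m)/2)"
  define Bad where "Bad t = {\<sigma> \<in> ?S. \<not> sat (rho_of k m \<sigma>) (P!t) \<and> w \<le> card {x \<in> vars (P!t). rho_of k m \<sigma> x = None}}" for t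
  have cS: "card ?S = 4 ^ (m * (k div 2))" by (simp add: card_PiE card_cartesian_product)
  have fS: "finite ?S" by (auto intro!: finite_PiE)
  have cBad: "real (card (Bad t)) \<le> 4 ^ (m * (k div 2)) * ?q" if t: "t < length P" for t
  proof -
    have L: "P!t \<subseteq> Lits k m" using refut_Lits[OF R t] .
    have fX: "finite {x \<in> vars (P!t). x \<noteq> Y}"
    proof -
      have "{x \<in> vars (P!t). x \<noteq> Y} \<subseteq> fst ` Lits k m" using L unfolding vars_def by auto
      then show ?thesis using finite_Lits finite_subset by blast
    qed
    show ?thesis
    proof (cases "w \<le> card {x \<in> vars (P!t). x \<noteq> Y}")
      case False
      have "Bad t = {}"
      proof -
        have "card {x \<in> vars (P!t). rho_of k m \<sigma> x = None} \<le> card {x \<in> vars (P!t). x \<noteq> Y}" for \<sigma>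
          by (intro card_mono fX) auto
        then have "\<not> w \<le> card {x \<in> vars (P!t). rho_of k m \<sigma> x = None}" for \<sigma>
          using False by (meson le_trans)
        then show ?thesis unfolding Bad_def by blast
      qed
      then show ?thesis by simp
    next
      case True
      then have "real w \<le> 2 * real (card (Blk k (P!t))) + real m" using Blk_size[OF L] by linarith
      then have bl: "(real w - real m)/2 \<le> real (card (Blk k (P!t)))" by simp
      have "real (card (Bad t)) \<le> real (card {\<sigma> \<in> ?S. \<not> sat (rho_of k m \<sigma>) (P!t)})"
        unfolding Bad_def by (intro of_nat_mono card_mono) (use fS in auto)
      also have "\<dots> \<le> 4 ^ (m * (k div 2)) * (3/4) ^ card (Blk k (P!t))" by (rule card_bad[OF L])
      also have "(3/4::real) ^ card (Blk k (P!t)) = (3/4) powr real (card (Blk k (P!t)))"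
        by (simp add: powr_realpow)
      also have "\<dots> \<le> ?q" by (rule powr_mono'[OF bl]) auto
      finally show ?thesis by simp
    qed
  qed
  have "real (card (\<Union>t\<in>{..<length P}. Bad t)) \<le> real (\<Sum>t\<in>{..<length P}. card (Bad t))"
    by (intro of_nat_mono card_UN_le) auto
  also have "\<dots> = (\<Sum>t\<in>{..<length P}. real (card (Bad t)))" by simp
  also have "\<dots> \<le> (\<Sum>t\<in>{..<length P}. 4 ^ (m * (k div 2)) * ?q)" by (intro sum_mono cBad) auto
  also have "\<dots> = 4 ^ (m * (k div 2)) * (real (length P) * ?q)" by simp
  also have "\<dots> < 4 ^ (m * (k div 2))" using small by simp
  also have "\<dots> = real (card ?S)" using cS by simp
  finally have lt: "card (\<Union>t\<in>{..<length P}. Bad t) < card ?S" by linarith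
  have "\<not> ?S \<subseteq> (\<Union>t\<in>{..<length P}. Bad t)"
  proof
    assume "?S \<subseteq> (\<Union>t\<in>{..<length P}. Bad t)"
    moreover have "finite (\<Union>t\<in>{..<length P}. Bad t)" using fS unfolding Bad_def by auto
    ultimately have "card ?S \<le> card (\<Union>t\<in>{..<length P}. Bad t)" by (rule card_mono[rotated])
    with lt show False by linarith
  qed
  then obtain \<sigma> where "\<sigma> \<in> ?S" "\<forall>t<length P. \<sigma> \<notin> Bad t" by auto
  then have "\<forall>t<length P. \<not> sat (rho_of k m \<sigma>) (P!t) \<longrightarrow> \<not> w \<le> card {x \<in> vars (P!t). rho_of k m \<sigma> x = None}"
    unfolding Bad_def by blast
  then show ?thesis by (intro exI[of _ \<sigma>]) (simp add: not_le)
qed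



lemma split_count:
  assumes fU: "finite U" and W0: "W0 \<subseteq> U" and PD: "\<And>E. P E = P (E - W0)"
  shows "card {E. E \<subseteq> U \<and> P E} = 2^card W0 * card {E. E \<subseteq> U - W0 \<and> P E}"
    and "card {E. E \<subseteq> U \<and> P E \<and> W0 \<subseteq> E} = card {E. E \<subseteq> U - W0 \<and> P E}"
proof -
  let ?N = "card {E. E \<subseteq> U - W0 \<and> P E}"
  have cls: "card {E. E \<subseteq> U \<and> P E \<and> E \<inter> W0 = D} = ?N" if D: "D \<subseteq> W0" for D
  proof -
    have "bij_betw (\<lambda>E. E - W0) {E. E \<subseteq> U \<and> P E \<and> E \<inter> W0 = D} {E. E \<subseteq> U - W0 \<and> P E}"
    proof (rule bij_betw_byWitness[where f' = "\<lambda>E. E \<union> D"])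
      show "\<forall>a\<in>{E. E \<subseteq> U \<and> P E \<and> E \<inter> W0 = D}. a - W0 \<union> D = a" by auto
      show "\<forall>a'\<in>{E. E \<subseteq> U - W0 \<and> P E}. a' \<union> D - W0 = a'" using D by auto
      show "(\<lambda>E. E - W0) ` {E. E \<subseteq> U \<and> P E \<and> E \<inter> W0 = D} \<subseteq> {E. E \<subseteq> U - W0 \<and> P E}"
        using PD by auto
      show "(\<lambda>E. E \<union> D) ` {E. E \<subseteq> U - W0 \<and> P E} \<subseteq> {E. E \<subseteq> U \<and> P E \<and> E \<inter> W0 = D}"
      proof
        fix E' assume "E' \<in> (\<lambda>E. E \<union> D) ` {E. E \<subseteq> U - W0 \<and> P E}"
        then obtain E where E: "E \<subseteq> U - W0" "P E" "E' = E \<union> D" by auto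
        have "E' - W0 = E" using E D by auto
        then have "P E'" using PD[of E'] E by simp
        then show "E' \<in> {E. E \<subseteq> U \<and> P E \<and> E \<inter> W0 = D}" using E D W0 by auto
      qed
    qed
    then show ?thesis by (rule bij_betw_same_card)
  qed
  have "{E. E \<subseteq> U \<and> P E} = (\<Union>D\<in>Pow W0. {E. E \<subseteq> U \<and> P E \<and> E \<inter> W0 = D})" by auto
  moreover have "card (\<Union>D\<in>Pow W0. {E. E \<subseteq> U \<and> P E \<and> E \<inter> W0 = D})
      = (\<Sum>D\<in>Pow W0. card {E. E \<subseteq> U \<and> P E \<and> E \<inter> W0 = D})"
  proof (rule card_UN_disjoint)
    show "finite (Pow W0)" using fU W0 finite_subset by blast
    show "\<forall>i\<in>Pow W0. finite {E. E \<subseteq> U \<and> P E \<and> E \<inter> W0 = i}" using fU by auto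
    show "\<forall>i\<in>Pow W0. \<forall>j\<in>Pow W0. i \<noteq> j \<longrightarrow>
      {E. E \<subseteq> U \<and> P E \<and> E \<inter> W0 = i} \<inter> {E. E \<subseteq> U \<and> P E \<and> E \<inter> W0 = j} = {}" by auto
  qed
  moreover have "(\<Sum>D\<in>Pow W0. card {E. E \<subseteq> U \<and> P E \<and> E \<inter> W0 = D}) = (\<Sum>D\<in>Pow W0. ?N)"
    using cls by (intro sum.cong) auto
  moreover have "card (Pow W0) = 2 ^ card W0" using fU W0 finite_subset card_Pow by blast
  ultimately show "card {E. E \<subseteq> U \<and> P E} = 2^card W0 * ?N" by simp
  have "{E. E \<subseteq> U \<and> P E \<and> W0 \<subseteq> E} = {E. E \<subseteq> U \<and> P E \<and> E \<inter> W0 = W0}" by auto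
  then show "card {E. E \<subseteq> U \<and> P E \<and> W0 \<subseteq> E} = ?N" using cls[of W0] by simp
qed

lemma card_avoid:
  assumes fU: "finite U" and fT: "finite T" and WU: "\<forall>v\<in>T. W v \<subseteq> U"
    and dj: "\<forall>v\<in>T. \<forall>v'\<in>T. v \<noteq> v' \<longrightarrow> W v \<inter> W v' = {}"
  shows "real (card {E. E \<subseteq> U \<and> (\<forall>v\<in>T. \<not> W v \<subseteq> E)}) = 2^card U * (\<Prod>v\<in>T. 1 - 1/2^card (W v))"
  using fT WU dj
proof (induction T rule: finite_induct)
  case empty
  have "{E. E \<subseteq> U \<and> (\<forall>v\<in>{}. \<not> W v \<subseteq> E)} = Pow U" by auto
  then show ?case using fU by (simp add: card_Pow)
next
  case (insert v0 T)
  let ?P = "\<lambda>E. \<forall>v\<in>T. \<not> W v \<subseteq> E"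
  have W0: "W v0 \<subseteq> U" using insert.prems by auto
  have PD: "?P E = ?P (E - W v0)" for E
  proof -
    have "W v \<subseteq> E \<longleftrightarrow> W v \<subseteq> E - W v0" if "v \<in> T" for v
    proof -
      have "v \<noteq> v0" using that insert.hyps(2) by auto
      then have "W v \<inter> W v0 = {}" using insert.prems(2) that by auto
      then show ?thesis by auto
    qed
    then show ?thesis by auto
  qed
  let ?N = "card {E. E \<subseteq> U - W v0 \<and> ?P E}"
  have c1: "card {E. E \<subseteq> U \<and> ?P E} = 2^card (W v0) * ?N" by (rule split_count(1)[where P = ?P, OF fU W0 PD])
  have c2: "card {E. E \<subseteq> U \<and> ?P E \<and> W v0 \<subseteq> E} = ?N" by (rule split_count(2)[where P = ?P, OF fU W0 PD])
  have IH: "real (card {E. E \<subseteq> U \<and> ?P E}) = 2^card U * (\<Prod>v\<in>T. 1 - 1/2^card (W v))"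
    using insert.IH insert.prems by auto
  have eq: "{E. E \<subseteq> U \<and> (\<forall>v\<in>insert v0 T. \<not> W v \<subseteq> E)} = {E. E \<subseteq> U \<and> ?P E} - {E. E \<subseteq> U \<and> ?P E \<and> W v0 \<subseteq> E}"
    by auto
  have "card {E. E \<subseteq> U \<and> (\<forall>v\<in>insert v0 T. \<not> W v \<subseteq> E)} = card {E. E \<subseteq> U \<and> ?P E} - ?N"
    unfolding eq using c2 fU by (subst card_Diff_subset) auto
  then have "real (card {E. E \<subseteq> U \<and> (\<forall>v\<in>insert v0 T. \<not> W v \<subseteq> E)}) = real (card {E. E \<subseteq> U \<and> ?P E}) - real ?N"
    using c1 by (simp add: of_nat_diff)
  also have "real ?N = real (card {E. E \<subseteq> U \<and> ?P E}) / 2^card (W v0)" using c1 by simp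
  also have "real (card {E. E \<subseteq> U \<and> ?P E}) - real (card {E. E \<subseteq> U \<and> ?P E}) / 2 ^ card (W v0)
      = real (card {E. E \<subseteq> U \<and> ?P E}) * (1 - 1/2^card (W v0))" by (simp add: field_simps)
  also have "\<dots> = 2^card U * (\<Prod>v\<in>insert v0 T. 1 - 1/2^card (W v))"
    using IH insert.hyps by simp
  finally show ?case .
qed


definition cube :: "nat \<Rightarrow> nat set \<Rightarrow> nat \<Rightarrow> nat set" where
  "cube k I a = {v. v < 2^k \<and> (\<forall>b\<in>I. bit v b = bit a b)}"

lemma card_cube:
  assumes I: "I \<subseteq> {..<k}"
  shows "2^(k - card I) \<le> card (cube k I a)"
proof -
  let ?J = "{..<k} - I"
  let ?g = "\<lambda>A. vec k (\<lambda>b. if b \<in> I then bit a b else b \<in> A)"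
  have inj: "inj_on ?g (Pow ?J)"
  proof (rule inj_onI)
    fix A A' assume A: "A \<in> Pow ?J" and A': "A' \<in> Pow ?J" and e: "?g A = ?g A'"
    show "A = A'"
    proof (rule set_eqI)
      fix b
      show "b \<in> A \<longleftrightarrow> b \<in> A'"
      proof (cases "b \<in> ?J")
        case True
        have "bit (?g A) b = bit (?g A') b" using e by simp
        then show ?thesis using True by (simp add: bit_vec)
      next
        case False then show ?thesis using A A' by auto
      qed
    qed
  qed
  have sub: "?g ` Pow ?J \<subseteq> cube k I a"
    unfolding cube_def using I by (auto simp: vec_less bit_vec)
  have "card (Pow ?J) = 2^(k - card I)" using I by (simp add: card_Pow card_Diff_subset finite_subset)
  moreover have "card (?g ` Pow ?J) = card (Pow ?J)" using inj by (rule card_image)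
  moreover have "card (?g ` Pow ?J) \<le> card (cube k I a)"
    using sub by (rule card_mono[rotated]) (auto simp: cube_def)
  ultimately show ?thesis by simp
qed

lemma finite_vp: "finite (vertex_pairs k)"
proof -
  have "vertex_pairs k \<subseteq> Pow {..<2^k}" unfolding vertex_pairs_def by auto
  then show ?thesis by (rule finite_subset) auto
qed

definition Fail :: "nat \<Rightarrow> nat set \<Rightarrow> nat set \<Rightarrow> nat set set set" where
  "Fail k S Q = {E. E \<subseteq> vertex_pairs k \<and> (\<forall>v\<in>Q - S. \<not> (\<forall>s\<in>S. {v,s} \<in> E))}"

lemma fail_bound:
  assumes S: "S \<subseteq> {..<2^k}" and Q: "Q \<subseteq> {..<2^k}"
  shows "real (card (Fail k S Q)) = 2^card (vertex_pairs k) * (1 - 1/2^card S)^card (Q - S)"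
proof -
  let ?W = "\<lambda>v. (\<lambda>s. {v,s}) ` S"
  have eqF: "Fail k S Q = {E. E \<subseteq> vertex_pairs k \<and> (\<forall>v\<in>Q - S. \<not> ?W v \<subseteq> E)}"
    unfolding Fail_def by auto
  have fQ: "finite (Q - S)" using Q finite_subset by blast
  have WU: "\<forall>v\<in>Q - S. ?W v \<subseteq> vertex_pairs k" using S Q unfolding vertex_pairs_def by blast
  have dj: "\<forall>v\<in>Q - S. \<forall>v'\<in>Q - S. v \<noteq> v' \<longrightarrow> ?W v \<inter> ?W v' = {}"
    by (auto simp: doubleton_eq_iff)
  have cW: "card (?W v) = card S" if "v \<in> Q - S" for v
  proof -
    have "inj_on (\<lambda>s. {v,s}) S" using that by (auto simp: inj_on_def doubleton_eq_iff)
    then show ?thesis by (rule card_image)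
  qed
  have "real (card (Fail k S Q)) = 2^card (vertex_pairs k) * (\<Prod>v\<in>Q - S. 1 - 1/2^card (?W v))"
    unfolding eqF by (rule card_avoid[OF finite_vp fQ WU dj])
  also have "(\<Prod>v\<in>Q - S. 1 - 1/2^card (?W v)) = (\<Prod>v\<in>Q - S. 1 - 1/(2::real)^card S)"
    using cW by (intro prod.cong) auto
  finally show ?thesis by simp
qed

definition GPk :: "nat \<Rightarrow> nat \<Rightarrow> nat \<Rightarrow> nat set set \<Rightarrow> bool" where
  "GPk k t0 D E \<longleftrightarrow> (\<forall>S I a. S \<subseteq> {..<2^k} \<longrightarrow> card S < t0 \<longrightarrow> I \<subseteq> {..<k} \<longrightarrow> card I \<le> D \<longrightarrow> a < (2::nat)^k
            \<longrightarrow> (\<exists>v<2^k. (\<forall>b\<in>I. bit v b = bit a b) \<and> v \<notin> S \<and> (\<forall>s\<in>S. {v,s} \<in> E)))"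

lemma card_small_sets:
  assumes fV: "finite V" and ne: "V \<noteq> {}"
  shows "card {S. S \<subseteq> V \<and> card S < t0} \<le> 2 * card V ^ t0"
proof -
  let ?L = "{xs. set xs \<subseteq> V \<and> length xs = t0}"
  have "{S. S \<subseteq> V \<and> card S < t0} \<subseteq> insert {} (set ` ?L)"
  proof
    fix S assume S: "S \<in> {S. S \<subseteq> V \<and> card S < t0}"
    show "S \<in> insert {} (set ` ?L)"
    proof (cases "S = {}")
      case False
      have fS: "finite S" using S fV finite_subset by auto
      obtain xs where xs: "set xs = S" "distinct xs" using finite_distinct_list[OF fS] by blast
      have lx: "length xs = card S" using xs distinct_card by fastforce
      have "xs \<noteq> []" using xs False by auto
      let ?ys = "xs @ replicate (t0 - card S) (hd xs)"
      have "set ?ys = S" using xs \<open>xs \<noteq> []\<close> by (auto simp: hd_in_set)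
      moreover have "length ?ys = t0" using lx S by auto
      ultimately have "S \<in> set ` ?L" using S by (intro image_eqI[of _ set ?ys]) auto
      then show ?thesis by simp
    qed simp
  qed
  then have "card {S. S \<subseteq> V \<and> card S < t0} \<le> card (insert {} (set ` ?L))"
    using fV by (intro card_mono) (auto simp: finite_lists_length_eq)
  also have "\<dots> \<le> Suc (card (set ` ?L))" using fV by (simp add: card_insert_if finite_lists_length_eq)
  also have "\<dots> \<le> Suc (card ?L)" using card_image_le[of ?L set] fV by (simp add: finite_lists_length_eq)
  also have "\<dots> = Suc (card V ^ t0)" using fV by (simp add: card_lists_length_eq)
  also have "\<dots> \<le> 2 * card V ^ t0"
  proof -
    have "card V > 0" using fV ne by (simp add: card_gt_0_iff)
    then have "card V ^ t0 \<ge> 1" by simp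
    then show ?thesis by simp
  qed
  finally show ?thesis .
qed


lemma notGP_bound:
  assumes Dk: "D \<le> k"
  shows "real (card {E. E \<subseteq> vertex_pairs k \<and> \<not> GPk k t0 D E})
    \<le> 2 * 2^(k*t0) * 4^k * 2^card (vertex_pairs k) * (1 - 1/2^t0)^(2^(k-D) - t0)"
proof -
  let ?SS = "{S. S \<subseteq> {..<(2::nat)^k} \<and> card S < t0}"
  let ?IA = "{p. fst p \<subseteq> {..<k} \<and> card (fst p) \<le> D \<and> snd p < (2::nat)^k}"
  let ?F = "\<lambda>S p. Fail k S (cube k (fst p) (snd p))"
  let ?\<beta> = "(1 - 1/(2::real)^t0)^(2^(k-D) - t0)"
  let ?VP = "card (vertex_pairs k)"
  have sub: "{E. E \<subseteq> vertex_pairs k \<and> \<not> GPk k t0 D E} \<subseteq> (\<Union>S\<in>?SS. \<Union>p\<in>?IA. ?F S p)"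
  proof
    fix E assume "E \<in> {E. E \<subseteq> vertex_pairs k \<and> \<not> GPk k t0 D E}"
    then have E: "E \<subseteq> vertex_pairs k" and nG: "\<not> GPk k t0 D E" by auto
    then obtain S I and a :: nat where S: "S \<subseteq> {..<2^k}" "card S < t0" and I: "I \<subseteq> {..<k}" "card I \<le> D" and a: "a < 2^k"
      and no: "\<not> (\<exists>v<2^k. (\<forall>b\<in>I. bit v b = bit a b) \<and> v \<notin> S \<and> (\<forall>s\<in>S. {v,s} \<in> E))"
      unfolding GPk_def by blast
    have "E \<in> ?F S (I, a)" using E no unfolding Fail_def cube_def by auto
    moreover have "(I, a) \<in> ?IA" using I a by auto
    ultimately show "E \<in> (\<Union>S\<in>?SS. \<Union>p\<in>?IA. ?F S p)" using S by blast
  qed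
  have fSS: "finite ?SS" by auto
  have IAsub: "?IA \<subseteq> Pow {..<k} \<times> {..<2^k}" by auto
  have fIA: "finite ?IA" using IAsub by (rule finite_subset) auto
  have cIA: "card ?IA \<le> 4^k"
  proof -
    have "card ?IA \<le> card (Pow {..<k} \<times> {..<(2::nat)^k})" using IAsub by (intro card_mono) auto
    also have "\<dots> = 2^k * 2^k" by (simp add: card_cartesian_product card_Pow)
    also have "\<dots> = 4^k" by (simp flip: power_mult_distrib)
    finally show ?thesis .
  qed
  have cSS: "card ?SS \<le> 2 * 2^(k*t0)"
  proof -
    have "(0::nat) \<in> {..<(2::nat)^k}" by simp
    then have "{..<(2::nat)^k} \<noteq> {}" by blast
    then have "card ?SS \<le> 2 * card {..<(2::nat)^k} ^ t0" using card_small_sets[of "{..<(2::nat)^k}" t0] by simp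
    then show ?thesis by (simp add: power_mult)
  qed
  have termb: "real (card (?F S p)) \<le> 2^?VP * ?\<beta>" if S: "S \<in> ?SS" and p: "p \<in> ?IA" for S p
  proof -
    obtain I a where pa: "p = (I, a)" by (cases p)
    have I: "I \<subseteq> {..<k}" "card I \<le> D" using p pa by auto
    have Q: "cube k I a \<subseteq> {..<2^k}" unfolding cube_def by auto
    have eq: "real (card (?F S p)) = 2^?VP * (1 - 1/2^card S)^card (cube k I a - S)"
      using fail_bound[of S k "cube k I a"] S Q pa by auto
    have "2^(k-D) \<le> (2::nat)^(k - card I)" using I Dk by (intro power_increasing) auto
    also have "\<dots> \<le> card (cube k I a)" using card_cube[OF I(1)] .
    finally have c1: "2^(k-D) \<le> card (cube k I a)" .
    have "card (cube k I a) - card S \<le> card (cube k I a - S)" by (rule diff_card_le_card_Diff) (use S finite_subset in auto)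
    then have n: "2^(k-D) - t0 \<le> card (cube k I a - S)" using c1 S by auto
    have x0: "0 \<le> 1 - 1/(2::real)^card S" by simp
    have xy: "1 - 1/(2::real)^card S \<le> 1 - 1/2^t0"
    proof -
      have "(2::real)^card S \<le> 2^t0" using S by (intro power_increasing) auto
      then have "1/(2::real)^t0 \<le> 1/2^card S" by (intro divide_left_mono) auto
      then show ?thesis by simp
    qed
    have "(1 - 1/(2::real)^card S)^card (cube k I a - S) \<le> (1 - 1/2^t0)^card (cube k I a - S)"
      using xy x0 by (rule power_mono)
    also have "\<dots> \<le> ?\<beta>" using n by (intro power_decreasing) auto
    finally show ?thesis unfolding eq by simp
  qed
  have "real (card {E. E \<subseteq> vertex_pairs k \<and> \<not> GPk k t0 D E}) \<le> real (card (\<Union>S\<in>?SS. \<Union>p\<in>?IA. ?F S p))"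
  proof -
    have "finite (\<Union>S\<in>?SS. \<Union>p\<in>?IA. ?F S p)"
      using fSS fIA finite_vp by (auto simp: Fail_def)
    then show ?thesis using sub by (intro of_nat_mono card_mono) auto
  qed
  also have "\<dots> \<le> real (\<Sum>S\<in>?SS. card (\<Union>p\<in>?IA. ?F S p))" by (intro of_nat_mono card_UN_le fSS)
  also have "\<dots> \<le> real (\<Sum>S\<in>?SS. \<Sum>p\<in>?IA. card (?F S p))"
    by (intro of_nat_mono sum_mono card_UN_le fIA)
  also have "\<dots> = (\<Sum>S\<in>?SS. \<Sum>p\<in>?IA. real (card (?F S p)))" by simp
  also have "\<dots> \<le> (\<Sum>S\<in>?SS. \<Sum>p\<in>?IA. 2^?VP * ?\<beta>)" by (intro sum_mono termb) auto
  also have "\<dots> = real (card ?SS) * real (card ?IA) * (2^?VP * ?\<beta>)" by simp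
  also have "\<dots> \<le> (2 * 2^(k*t0)) * 4^k * (2^?VP * ?\<beta>)"
  proof -
    have b0: "0 \<le> 2^?VP * ?\<beta>" by simp
    have "real (card ?SS) \<le> real (2 * 2^(k*t0))" using cSS by (simp only: of_nat_le_iff)
    then have "real (card ?SS) \<le> 2 * 2^(k*t0)" by simp
    moreover have "real (card ?IA) \<le> real (4^k)" using cIA by (simp only: of_nat_le_iff)
    then have "real (card ?IA) \<le> 4^k" by simp
    ultimately show ?thesis using b0 by (intro mult_right_mono mult_mono) auto
  qed
  finally show ?thesis by (simp add: mult.assoc)
qed



lemma long_refut:
  assumes GP: "GPk k (k div 16) (k - k div 2 + k div 4) E"
  and R: "is_refutation (Psi k m E) P"
  and k4: "4 \<le> k"
  shows "1 \<le> real (length P) * (3/4) powr ((real (k div 4 * (k div 16)) - real m)/2)"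
proof (rule ccontr)
  assume "\<not> ?thesis"
  then have "real (length P) * (3/4) powr ((real (k div 4 * (k div 16)) - real m)/2) < 1" by simp
  from exists_good_sigma[OF R this] obtain \<sigma> where
    good: "\<forall>t<length P. \<not> sat (rho_of k m \<sigma>) (P!t) \<longrightarrow> card {x \<in> vars (P!t). rho_of k m \<sigma> x = None} < k div 4 * (k div 16)"
    by blast
  have nf: "\<forall>i<m. k div 2 \<le> card {b. b < k \<and> rho_of k m \<sigma> (X i b) = None}" using rho_nfree by blast
  have th: "0 < k div 4" "k div 4 \<le> k div 2" using k4 by auto
  have Db: "k - k div 2 + (k div 4 - 1) \<le> k - k div 2 + k div 4" by simp
  have GP': "\<forall>S I a. S \<subseteq> {..<2 ^ k} \<longrightarrow> card S < k div 16 \<longrightarrow> I \<subseteq> {..<k} \<longrightarrow>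
    card I \<le> k - k div 2 + k div 4 \<longrightarrow> a < (2::nat) ^ k \<longrightarrow>
    (\<exists>v<2 ^ k. (\<forall>b\<in>I. bit v b = bit a b) \<and> v \<notin> S \<and> (\<forall>s\<in>S. {v, s} \<in> E))"
    using GP unfolding GPk_def by blast
  have "\<not> is_refutation (Psi k m E) P"
    by (rule no_refut[OF rho_of_Y nf th(1) th(2) Db GP' good])
  with R show False by simp
qed



lemma pw34:
  fixes z :: real assumes z: "0 \<le> z"
  shows "(3/4::real) powr z \<le> 2 powr (-z/4)"
proof -
  let ?u = "(2::real) powr (-1/4)"
  have u0: "0 < ?u" by simp
  have u4: "?u ^ 4 = 1/2"
  proof -
    have "?u ^ 4 = ?u powr (real 4)" using u0 by (simp add: powr_realpow)
    also have "\<dots> = 2 powr (-1/4 * 4)" by (simp add: powr_powr)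
    also have "\<dots> = 1/2" by (simp add: powr_minus_divide)
    finally show ?thesis .
  qed
  have u: "3/4 \<le> ?u"
  proof (rule ccontr)
    assume "\<not> 3/4 \<le> ?u"
    then have "?u < 3/4" by simp
    then have "?u ^ 4 < (3/4) ^ 4" using u0 by (intro power_strict_mono) auto
    then have "1/2 < (3/4::real) ^ 4" by (simp only: u4)
    then show False by (simp add: power_divide)
  qed
  have "(3/4::real) powr z \<le> ?u powr z" using u z by (intro powr_mono2) auto
  also have "\<dots> = 2 powr (-z/4)" by (simp add: powr_powr)
  finally show ?thesis .
qed

lemma div_lb: "real k / real d - 1 \<le> real (k div d)" if "0 < d" for k d :: nat
proof -
  have "k < d * (k div d) + d" using that
    by (metis add_less_cancel_left div_mult_mod_eq mod_less_divisor mult.commute)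
  then have "real k < real d * real (k div d) + real d" by (metis of_nat_add of_nat_less_iff of_nat_mult)
  then show ?thesis using that by (simp add: field_simps)
qed

lemma det_part:
  fixes c :: real
  assumes k16: "16 \<le> k"
    and C1: "real k ^ 2 / 1000 \<le> ((real k/4-1)*(real k/16-1) - c*real k)/8"
    and m: "real m = c * real k"
    and GP: "GPk k (k div 16) (k - k div 2 + k div 4) E"
  shows "res_length (Psi k m E) = \<infinity> \<or> (\<exists>L. res_length (Psi k m E) = enat L \<and>
                   real L \<ge> real (2^k) powr (1/1000 * log 2 (real (2^k))))"
proof (cases "\<exists>P. is_refutation (Psi k m E) P")
  case False
  then have "res_length (Psi k m E) = \<infinity>" unfolding res_length_def by (simp only: if_False)
  then show ?thesis by simp
next
  case True
  let ?L = "LEAST n. \<exists>P. is_refutation (Psi k m E) P \<and> length P = n"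
  have "\<exists>n P. is_refutation (Psi k m E) P \<and> length P = n" using True by blast
  then have "\<exists>P. is_refutation (Psi k m E) P \<and> length P = ?L" by (rule LeastI_ex)
  then obtain P where R: "is_refutation (Psi k m E) P" and lP: "length P = ?L" by blast
  have rl: "res_length (Psi k m E) = enat ?L" unfolding res_length_def using True by simp
  have lr: "1 \<le> real (length P) * (3/4) powr ((real (k div 4 * (k div 16)) - real m)/2)"
    using long_refut[OF GP R] k16 by simp
  let ?y0 = "((real k/4-1)*(real k/16-1) - c*real k)/2"
  have a1: "real k / 4 - 1 \<le> real (k div 4)" using div_lb[of 4 k] by simp
  have a2: "real k / 16 - 1 \<le> real (k div 16)" using div_lb[of 16 k] by simp
  have p1: "0 \<le> real k / 4 - 1" "0 \<le> real k / 16 - 1" using k16 by auto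
  have "(real k/4-1)*(real k/16-1) \<le> real (k div 4) * real (k div 16)"
    using a1 a2 p1 by (intro mult_mono) auto
  then have yy: "?y0 \<le> (real (k div 4 * (k div 16)) - real m)/2" using m by simp
  have "0 \<le> real k ^ 2 / 1000" by simp
  then have "0 \<le> ((real k/4-1)*(real k/16-1) - c*real k)/8" using C1 by (rule order_trans)
  moreover have "\<And>Z::real. 0 \<le> Z/8 \<Longrightarrow> 0 \<le> Z/2" by simp
  ultimately have y00: "0 \<le> ?y0" by blast
  have "(3/4::real) powr ((real (k div 4 * (k div 16)) - real m)/2) \<le> (3/4) powr ?y0"
    using yy by (intro powr_mono') auto
  also have "\<dots> \<le> 2 powr (-?y0/4)" using pw34[OF y00] .
  also have "\<dots> \<le> 2 powr (-(real k ^ 2 / 1000))" using C1 by (intro powr_mono) auto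
  finally have "1 \<le> real (length P) * 2 powr (-(real k ^ 2 / 1000))"
    using lr by (smt (verit) mult_left_mono of_nat_0_le_iff)
  then have "2 powr (real k ^ 2 / 1000) \<le> real (length P) * 2 powr (-(real k ^ 2 / 1000)) * 2 powr (real k ^ 2 / 1000)"
    by simp
  also have "\<dots> = real (length P)" by (simp add: powr_minus field_simps)
  finally have len: "2 powr (real k ^ 2 / 1000) \<le> real (length P)" .
  have "real (2^k) powr (1/1000 * log 2 (real (2^k))) = 2 powr (real k ^ 2 / 1000)"
  proof -
    have e: "real ((2::nat)^k) = 2 powr real k" by (simp add: powr_realpow)
    show ?thesis unfolding e by (simp add: powr_powr power2_eq_square)
  qed
  with len lP rl show ?thesis by simp
qed


lemma prob_part:
  fixes \<delta> :: real
  assumes k16: "16 \<le> k"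
  and pos: "0 \<le> 2 powr (real k/4 - 1) - real k/16"
  and g: "2 * 2 powr (real k^2/16) * 4 powr real k * exp (-(2 powr (real k/4-1) - real k/16)/2 powr (real k/16)) \<le> \<delta>"
  and imp: "\<forall>E. E \<subseteq> vertex_pairs k \<longrightarrow> GPk k (k div 16) (k - k div 2 + k div 4) E \<longrightarrow> Q E"
  shows "gnp_half_prob k Q \<ge> 1 - \<delta>"
proof -
  let ?t0 = "k div 16" and ?D = "k - k div 2 + k div 4"
  let ?VP = "card (vertex_pairs k)"
  let ?a = "1/(2::real)^?t0"
  define N where "N = 2^(k - ?D) - ?t0"
  let ?\<beta> = "(1 - ?a)^N"
  let ?num = "2 powr (real k/4 - 1) - real k/16"
  have Dk: "?D \<le> k" by simp
  have nb: "real (card {E. E \<subseteq> vertex_pairs k \<and> \<not> GPk k ?t0 ?D E}) \<le> 2 * 2^(k*?t0) * 4^k * 2^?VP * ?\<beta>"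
    using notGP_bound[OF Dk] unfolding N_def by simp
  have t0le: "real ?t0 \<le> real k / 16"
  proof -
    have "k div 16 * 16 \<le> k" by simp
    then have "real (k div 16) * 16 \<le> real k" by (metis of_nat_le_iff of_nat_mult of_nat_numeral)
    then show ?thesis by simp
  qed
  have kD: "real k / 4 - 1 \<le> real (k - ?D)"
  proof -
    have "k - ?D = k div 2 - k div 4" by simp
    moreover have "k div 4 \<le> k div 2 - k div 4" by simp
    ultimately have "real (k div 4) \<le> real (k - ?D)" by simp
    then show ?thesis using div_lb[of 4 k] by simp
  qed
  have b1: "(2::real)^(k*?t0) \<le> 2 powr (real k^2/16)"
  proof -
    have "(2::real)^(k*?t0) = 2 powr real (k*?t0)" by (rule powr_realpow[symmetric]) simp
    also have "\<dots> \<le> 2 powr (real k^2/16)"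
    proof (rule powr_mono)
      have "real (k*?t0) = real k * real ?t0" by simp
      also have "\<dots> \<le> real k * (real k / 16)" using t0le by (intro mult_left_mono) auto
      finally show "real (k*?t0) \<le> real k^2/16" by (simp add: power2_eq_square)
    qed simp
    finally show ?thesis .
  qed
  have b2: "(4::real)^k = 4 powr real k" by (simp add: powr_realpow)
  have a0: "0 \<le> 1 - ?a" "?a \<le> 1" by auto
  have b3: "?\<beta> \<le> exp (- (?a * real N))"
  proof -
    have "1 - ?a \<le> exp (-?a)" using exp_ge_add_one_self[of "-?a"] by simp
    then have "?\<beta> \<le> exp (-?a) ^ N" using a0 by (intro power_mono) auto
    also have "\<dots> = exp (real N * (-?a))" by (rule exp_of_nat_mult[symmetric])
    also have "\<dots> = exp (- (?a * real N))" by (simp only: mult_minus_right mult_minus_left mult.commute)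
    finally show ?thesis .
  qed
  have Nge: "?num \<le> real N"
  proof -
    have "2 powr (real k/4 - 1) \<le> 2 powr real (k - ?D)" using kD by (intro powr_mono) auto
    also have "\<dots> = real ((2::nat)^(k - ?D))" by (subst powr_realpow) auto
    finally have "2 powr (real k/4 - 1) \<le> real ((2::nat)^(k - ?D))" .
    moreover have "real ((2::nat)^(k - ?D)) - real ?t0 \<le> real N" unfolding N_def by linarith
    ultimately show ?thesis using t0le by linarith
  qed
  have aN: "?num / 2 powr (real k/16) \<le> ?a * real N"
  proof -
    have p16: "0 < 2 powr (real k/16)" by simp
    have "(2::real)^?t0 = 2 powr real ?t0" by (simp add: powr_realpow)
    also have "\<dots> \<le> 2 powr (real k/16)" using t0le by (intro powr_mono) auto
    finally have "1 / 2 powr (real k/16) \<le> ?a" by (intro divide_left_mono) auto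
    then have "(1 / 2 powr (real k/16)) * real N \<le> ?a * real N" by (rule mult_right_mono) simp
    then have "real N / 2 powr (real k/16) \<le> ?a * real N" by simp
    moreover have "?num / 2 powr (real k/16) \<le> real N / 2 powr (real k/16)"
      using Nge p16 by (intro divide_right_mono) auto
    ultimately show ?thesis by linarith
  qed
  have b4: "exp (- (?a * real N)) \<le> exp (-?num / 2 powr (real k/16))"
  proof -
    have "- (?a * real N) \<le> - (?num / 2 powr (real k/16))" using aN by linarith
    also have "\<dots> = -?num / 2 powr (real k/16)" by (simp only: minus_divide_left)
    finally show ?thesis by (rule exp_le_cancel_iff[THEN iffD2])
  qed
  have "2 * 2^(k*?t0) * 4^k * ?\<beta> \<le> 2 * 2 powr (real k^2/16) * 4 powr real k * exp (-?num / 2 powr (real k/16))"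
  proof -
    have "?\<beta> \<le> exp (-?num / 2 powr (real k/16))" using b3 b4 by linarith
    moreover have "0 \<le> ?\<beta>" using a0 by simp
    ultimately show ?thesis unfolding b2 using b1
      by (intro mult_mono) auto
  qed
  then have bd: "2 * 2^(k*?t0) * 4^k * ?\<beta> \<le> \<delta>" using g by linarith
  have fin: "finite (Pow (vertex_pairs k))" using finite_vp by simp
  have cP: "card (Pow (vertex_pairs k)) = 2^?VP" using finite_vp by (simp add: card_Pow)
  have part: "card {E. E \<subseteq> vertex_pairs k \<and> GPk k ?t0 ?D E} + card {E. E \<subseteq> vertex_pairs k \<and> \<not> GPk k ?t0 ?D E} = 2^?VP"
  proof -
    have "Pow (vertex_pairs k) = {E. E \<subseteq> vertex_pairs k \<and> GPk k ?t0 ?D E} \<union> {E. E \<subseteq> vertex_pairs k \<and> \<not> GPk k ?t0 ?D E}"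
      by auto
    then have "card (Pow (vertex_pairs k)) = card {E. E \<subseteq> vertex_pairs k \<and> GPk k ?t0 ?D E} + card {E. E \<subseteq> vertex_pairs k \<and> \<not> GPk k ?t0 ?D E}"
      using fin by (subst card_Un_disjoint[symmetric]) auto
    then show ?thesis using cP by simp
  qed
  have sub: "{E. E \<subseteq> vertex_pairs k \<and> GPk k ?t0 ?D E} \<subseteq> {E. E \<subseteq> vertex_pairs k \<and> Q E}" using imp by auto
  have cQ: "card {E. E \<subseteq> vertex_pairs k \<and> GPk k ?t0 ?D E} \<le> card {E. E \<subseteq> vertex_pairs k \<and> Q E}"
    using sub fin by (intro card_mono) auto
  have pp: "(0::real) < 2^?VP" by simp
  have "real (card {E. E \<subseteq> vertex_pairs k \<and> \<not> GPk k ?t0 ?D E}) \<le> 2^?VP * \<delta>"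
  proof -
    have "2 * 2^(k*?t0) * 4^k * 2^?VP * ?\<beta> = 2^?VP * (2 * 2^(k*?t0) * 4^k * ?\<beta>)" by (simp add: algebra_simps)
    also have "\<dots> \<le> 2^?VP * \<delta>" using bd by (intro mult_left_mono) auto
    finally show ?thesis using nb by linarith
  qed
  moreover have "real (card {E. E \<subseteq> vertex_pairs k \<and> GPk k ?t0 ?D E}) + real (card {E. E \<subseteq> vertex_pairs k \<and> \<not> GPk k ?t0 ?D E}) = 2^?VP"
  proof -
    have "real (card {E. E \<subseteq> vertex_pairs k \<and> GPk k ?t0 ?D E} + card {E. E \<subseteq> vertex_pairs k \<and> \<not> GPk k ?t0 ?D E}) = real ((2::nat)^?VP)"
      using part by (simp only:)
    then show ?thesis by simp
  qed
  ultimately have "2^?VP * (1 - \<delta>) \<le> real (card {E. E \<subseteq> vertex_pairs k \<and> GPk k ?t0 ?D E})"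
    by (simp add: algebra_simps)
  also have "\<dots> \<le> real (card {E. E \<subseteq> vertex_pairs k \<and> Q E})" using cQ by simp
  finally have "1 - \<delta> \<le> real (card {E. E \<subseteq> vertex_pairs k \<and> Q E}) / 2^?VP"
    using pp by (simp add: field_simps)
  then show ?thesis unfolding gnp_half_prob_def using cP by simp
qed



lemma lim1: fixes c :: real shows
 "filterlim (\<lambda>x::real. (((x/4-1)*(x/16-1) - c*x)/8 - x^2/1000)) at_top at_top"
  by real_asymp
lemma lim2: "((\<lambda>x::real. 2 * 2 powr (x^2/16) * 4 powr x * exp (-(2 powr (x/4-1) - x/16)/2 powr (x/16))) \<longlongrightarrow> 0) at_top"
  by real_asymp
lemma lim3: "filterlim (\<lambda>x::real. 2 powr (x/4 - 1) - x/16) at_top at_top"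
  by real_asymp

theorem mainTheorem4:
  fixes c :: real
  assumes "c > 0"
  shows "\<exists>\<epsilon>>0. \<forall>\<delta>>0. \<exists>K. \<forall>k m. k \<ge> K \<longrightarrow> real m = c * real k \<longrightarrow>
           gnp_half_prob k (\<lambda>E. res_length (Psi k m E) = \<infinity> \<or>
              (\<exists>L. res_length (Psi k m E) = enat L \<and>
                   real L \<ge> real (2^k) powr (\<epsilon> * log 2 (real (2^k)))))
           \<ge> 1 - \<delta>"
proof (intro exI[of _ "1/1000"] conjI allI impI)
  show "(0::real) < 1/1000" by simp
  fix \<delta> :: real assume d: "0 < \<delta>"
  have A1: "\<forall>Z. eventually (\<lambda>x::real. Z \<le> ((x/4-1)*(x/16-1) - c*x)/8 - x^2/1000) at_top"
    using lim1[of c] unfolding filterlim_at_top .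
  have e1: "eventually (\<lambda>x::real. 0 \<le> ((x/4-1)*(x/16-1) - c*x)/8 - x^2/1000) at_top"
    using A1[rule_format, of 0] .
  have A2: "\<forall>Z. eventually (\<lambda>x::real. Z \<le> 2 powr (x/4 - 1) - x/16) at_top"
    using lim3 unfolding filterlim_at_top .
  have e2: "eventually (\<lambda>x::real. 0 \<le> 2 powr (x/4 - 1) - x/16) at_top"
    using A2[rule_format, of 0] .
  have e3: "eventually (\<lambda>x::real. 2 * 2 powr (x^2/16) * 4 powr x * exp (-(2 powr (x/4-1) - x/16)/2 powr (x/16)) < \<delta>) at_top"
    using order_tendstoD(2)[OF lim2 d] .
  have "eventually (\<lambda>x::real. (0 \<le> ((x/4-1)*(x/16-1) - c*x)/8 - x^2/1000) \<and> 0 \<le> 2 powr (x/4 - 1) - x/16 \<and>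
       2 * 2 powr (x^2/16) * 4 powr x * exp (-(2 powr (x/4-1) - x/16)/2 powr (x/16)) < \<delta>) at_top"
    using e1 e2 e3 by eventually_elim auto
  from eventually_compose_filterlim[OF this filterlim_real_sequentially]
  have "eventually (\<lambda>k. (0 \<le> ((real k/4-1)*(real k/16-1) - c*real k)/8 - real k^2/1000) \<and> 0 \<le> 2 powr (real k/4 - 1) - real k/16 \<and>
       2 * 2 powr (real k^2/16) * 4 powr real k * exp (-(2 powr (real k/4-1) - real k/16)/2 powr (real k/16)) < \<delta>) sequentially" .
  moreover have "eventually (\<lambda>k::nat. 16 \<le> k) sequentially" by (rule eventually_ge_at_top)
  ultimately have "eventually (\<lambda>k. 16 \<le> k \<and> (0 \<le> ((real k/4-1)*(real k/16-1) - c*real k)/8 - real k^2/1000) \<and> 0 \<le> 2 powr (real k/4 - 1) - real k/16 \<and>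
       2 * 2 powr (real k^2/16) * 4 powr real k * exp (-(2 powr (real k/4-1) - real k/16)/2 powr (real k/16)) < \<delta>) sequentially"
    by eventually_elim auto
  then obtain K where K: "\<And>k. K \<le> k \<Longrightarrow> 16 \<le> k \<and> (0 \<le> ((real k/4-1)*(real k/16-1) - c*real k)/8 - real k^2/1000) \<and> 0 \<le> 2 powr (real k/4 - 1) - real k/16 \<and>
       2 * 2 powr (real k^2/16) * 4 powr real k * exp (-(2 powr (real k/4-1) - real k/16)/2 powr (real k/16)) < \<delta>"
    unfolding eventually_sequentially by blast
  show "\<exists>K. \<forall>k m. k \<ge> K \<longrightarrow> real m = c * real k \<longrightarrow>
           gnp_half_prob k (\<lambda>E. res_length (Psi k m E) = \<infinity> \<or>
              (\<exists>L. res_length (Psi k m E) = enat L \<and>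
                   real L \<ge> real (2^k) powr (1/1000 * log 2 (real (2^k)))))
           \<ge> 1 - \<delta>"
  proof (intro exI[of _ K] allI impI)
    fix k m assume k: "K \<le> k" and m: "real m = c * real k"
    note Kk = K[OF k]
    have C1: "real k ^ 2 / 1000 \<le> ((real k/4-1)*(real k/16-1) - c*real k)/8" using Kk by linarith
    show "gnp_half_prob k (\<lambda>E. res_length (Psi k m E) = \<infinity> \<or>
              (\<exists>L. res_length (Psi k m E) = enat L \<and>
                   real L \<ge> real (2^k) powr (1/1000 * log 2 (real (2^k))))) \<ge> 1 - \<delta>"
    proof (rule prob_part)
      show "16 \<le> k" using Kk by blast
      show "0 \<le> 2 powr (real k/4 - 1) - real k/16" using Kk by blast
      show "2 * 2 powr (real k^2/16) * 4 powr real k * exp (-(2 powr (real k/4-1) - real k/16)/2 powr (real k/16)) \<le> \<delta>"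
        using Kk by linarith
      show "\<forall>E. E \<subseteq> vertex_pairs k \<longrightarrow> GPk k (k div 16) (k - k div 2 + k div 4) E \<longrightarrow>
        res_length (Psi k m E) = \<infinity> \<or> (\<exists>L. res_length (Psi k m E) = enat L \<and>
                   real L \<ge> real (2^k) powr (1/1000 * log 2 (real (2^k))))"
        using det_part[OF _ C1 m] Kk by blast
    qed
  qed
qed

end
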